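(* Let $n$ be a non-negative integer, let $a,b$ be integers with $\gcd(a,b)=1$, $a+b\neq 0$ and $a+b\neq\pm1$, and let $m$ be a natural number with $m>2$. Put $B(N,m,a,b)=\sum_{k=0}^{N}\binom{N}{k}^m a^{N-k}b^k$. Then $$\omega_{a+b}\big(B(2n,m,a,b)\big)\ge \omega_{a+b}\Big(\binom{2n}{n}\Big),\qquad \omega_{a+b}\big(B(2n+1,m,a,b)\big)\ge 1+\omega_{a+b}\Big((2n+1)\binom{2n}{n}\Big).$$
   Context: For an integer $x$ with $x\neq 0$ and $x\neq\pm1$ and an integer $y$, $\omega_x(y)$ denotes the largest non-negative integer $e$ such that $x^e$ divides $y$ (with the convention $\omega_x(0)=\infty$). Equivalently, the claim says that $(a+b)^{\omega_{a+b}(\binom{2n}{n})}$ divides $B(2n,m,a,b)$ and $(a+b)^{1+\omega_{a+b}((2n+1)\binom{2n}{n})}$ divides $B(2n+1,m,a,b)$. *)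

theory Defs
  imports Main "HOL-Library.Extended_Nat"
begin

text \<open>omega x y: the largest e with x^e dvd y; infinity when y = 0.
  Meaningful for x not in {0, 1, -1}.\<close>
definition omega :: "int \<Rightarrow> int \<Rightarrow> enat" where
  "omega x y = (if y = 0 then \<infinity> else enat (GREATEST e. x ^ e dvd y))"

definition B :: "nat \<Rightarrow> nat \<Rightarrow> int \<Rightarrow> int \<Rightarrow> int" where
  "B N m a b = (\<Sum>k=0..N. int (N choose k) ^ m * a ^ (N - k) * b ^ k)"

end

theory Submission
  imports Defs "HOL-Computational_Algebra.Primes"
begin


lemma vand_shift:
  fixes c b j :: nat
  assumes hb: "c + b - j \<le> M" "j \<le> b"
  shows "(\<Sum>s\<le>M. (c choose s) * (b choose (s + j))) = (c + b) choose (b - j)"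
proof -
  have "(\<Sum>s\<le>M. (c choose s) * (b choose (s + j))) = (\<Sum>s\<le>b - j. (c choose s) * (b choose (s + j)))"
  proof (rule sum.mono_neutral_right)
    show "finite {..M}" by simp
    show "{..b - j} \<subseteq> {..M}" using hb by auto
    show "\<forall>i\<in>{..M} - {..b - j}. (c choose i) * (b choose (i + j)) = 0" by auto
  qed
  also have "\<dots> = (\<Sum>s\<le>b - j. (c choose s) * (b choose ((b - j) - s)))"
  proof (rule sum.cong)
    fix s assume "s \<in> {..b - j}"
    then have "b choose (s + j) = b choose (b - (s + j))" using binomial_symmetric[of "s+j" b] hb by auto
    moreover have "b - (s + j) = (b - j) - s" by simp
    ultimately show "(c choose s) * (b choose (s + j)) = (c choose s) * (b choose ((b - j) - s))" by simp
  qed simp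
  also have "\<dots> = (c + b) choose (b - j)" by (rule vandermonde)
  finally show ?thesis .
qed

lemma triple_sum:
  fixes N k j :: nat
  assumes "k \<le> N"
  shows "(\<Sum>i\<le>N. (i choose j) * (k choose i) * ((N - k) choose i)) = (k choose j) * ((N - j) choose k)"
proof (cases "j \<le> k")
  case False
  have "(i choose j) * (k choose i) = 0" for i
    using False by (cases "i \<le> k") auto
  then have "(\<Sum>i\<le>N. (i choose j) * (k choose i) * ((N - k) choose i)) = 0"
    by (intro sum.neutral) (metis mult_zero_left)
  moreover have "k choose j = 0" using False by simp
  ultimately show ?thesis by (metis mult_zero_left)
next
  case True
  have eq: "(i choose j) * (k choose i) = (k choose j) * ((k - j) choose (i - j))" if "j \<le> i" for i
  proof (cases "i \<le> k")
    case True
    then show ?thesis using choose_mult[of j i k] that by (simp add: mult.commute)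
  next
    case False
    then have "k - j < i - j" using \<open>j \<le> k\<close> by linarith
    then show ?thesis using False by (simp add: not_le binomial_eq_0)
  qed
  have "(\<Sum>i\<le>N. (i choose j) * (k choose i) * ((N - k) choose i))
      = (\<Sum>i\<in>{j..N}. (i choose j) * (k choose i) * ((N - k) choose i))"
    by (rule sum.mono_neutral_right) auto
  also have "\<dots> = (\<Sum>i\<in>{j..N}. (k choose j) * (((k - j) choose (i - j)) * ((N - k) choose i)))"
    by (rule sum.cong) (auto simp: eq)
  also have "\<dots> = (k choose j) * (\<Sum>i\<in>{j..N}. ((k - j) choose (i - j)) * ((N - k) choose i))"
    by (simp add: sum_distrib_left)
  also have "(\<Sum>i\<in>{j..N}. ((k - j) choose (i - j)) * ((N - k) choose i))
      = (\<Sum>s\<le>N - j. ((k - j) choose s) * ((N - k) choose (s + j)))"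
  proof -
    have "(\<Sum>s\<le>N - j. ((k - j) choose s) * ((N - k) choose (s + j)))
        = (\<Sum>i\<in>(\<lambda>s. s + j) ` {..N - j}. ((k - j) choose (i - j)) * ((N - k) choose i))"
      by (subst sum.reindex) (auto simp: inj_on_def)
    also have "(\<lambda>s. s + j) ` {..N - j} = {j..N}"
    proof
      show "(\<lambda>s. s + j) ` {..N - j} \<subseteq> {j..N}" using True assms by auto
      show "{j..N} \<subseteq> (\<lambda>s. s + j) ` {..N - j}"
      proof
        fix x assume "x \<in> {j..N}"
        then show "x \<in> (\<lambda>s. s + j) ` {..N - j}" by (intro image_eqI[of _ _ "x - j"]) auto
      qed
    qed
    finally show ?thesis by simp
  qed
  also have "\<dots> = ((N - j) choose k)"
  proof (cases "j \<le> N - k")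
    case True
    have "(\<Sum>s\<le>N - j. ((k - j) choose s) * ((N - k) choose (s + j))) = ((k - j) + (N - k)) choose ((N - k) - j)"
      by (rule vand_shift) (use True assms \<open>j \<le> k\<close> in auto)
    also have "(k - j) + (N - k) = N - j" using \<open>j \<le> k\<close> assms by simp
    also have "(N - j) choose ((N - k) - j) = (N - j) choose k"
      using binomial_symmetric[of k "N - j"] True assms by (simp add: algebra_simps)
    finally show ?thesis .
  next
    case False
    then have "N - j < k" using assms \<open>j \<le> k\<close> by linarith
    then have "(N - j) choose k = 0" by (simp add: binomial_eq_0)
    moreover have "(\<Sum>s\<le>N - j. ((k - j) choose s) * ((N - k) choose (s + j))) = 0"
      using False by (intro sum.neutral) (auto simp: binomial_eq_0)
    ultimately show ?thesis by metis
  qed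
  finally show ?thesis .
qed


lemma swap_choose:
  fixes N k j :: nat
  assumes "k \<le> N"
  shows "(N choose k) * ((N - k) choose j) = (N choose j) * ((N - j) choose k)"
proof (cases "j + k \<le> N")
  case True
  have 1: "(N choose (j + k)) * ((j + k) choose k) = (N choose k) * ((N - k) choose j)"
    using choose_mult[of k "j+k" N] True by simp
  have 2: "(N choose (j + k)) * ((j + k) choose j) = (N choose j) * ((N - j) choose k)"
    using choose_mult[of j "j+k" N] True by simp
  have "(j + k) choose k = (j + k) choose j"
    using binomial_symmetric[of k "j+k"] by simp
  then show ?thesis using 1 2 by simp
next
  case False
  then have "N - k < j" using assms by linarith
  then show ?thesis
  proof (cases "j \<le> N")
    case True
    then have "N - j < k" using False by linarith
    then show ?thesis using \<open>N - k < j\<close> by (simp add: binomial_eq_0)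
  qed (simp add: binomial_eq_0)
qed

lemma key_identity:
  fixes N k j :: nat
  assumes "k \<le> N"
  shows "(N choose k) * (k choose j) * ((N - k) choose j)
       = (N choose j) * (\<Sum>i\<le>N. (i choose j) * (k choose i) * ((N - k) choose i))"
  using swap_choose[OF assms, of j] triple_sum[OF assms, of j]
  by (simp add: algebra_simps)

lemma rep:
  fixes N m :: nat
  shows "\<exists>t::nat \<Rightarrow> int. \<forall>k\<le>N. int (N choose k) ^ m
            = (\<Sum>i\<le>N. t i * int (k choose i) * int ((N - k) choose i))"
proof (induction m)
  case 0
  show ?case
  proof (rule exI[of _ "\<lambda>i. if i = 0 then 1 else 0"], intro allI impI)
    fix k assume "k \<le> N"
    have "(\<Sum>i\<le>N. (if i = 0 then 1 else 0) * int (k choose i) * int ((N - k) choose i))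
        = (\<Sum>i\<le>N. if i = 0 then int (k choose i) * int ((N - k) choose i) else 0)"
      by (rule sum.cong) auto
    also have "\<dots> = 1" by (subst sum.delta) auto
    finally show "int (N choose k) ^ 0 = (\<Sum>i\<le>N. (if i = 0 then 1 else 0) * int (k choose i) * int ((N - k) choose i))" by simp
  qed
next
  case (Suc m)
  then obtain t :: "nat \<Rightarrow> int" where t: "\<And>k. k \<le> N \<Longrightarrow> int (N choose k) ^ m
            = (\<Sum>i\<le>N. t i * int (k choose i) * int ((N - k) choose i))" by blast
  define t' where "t' i = (\<Sum>j\<le>N. t j * int (N choose j) * int (i choose j))" for i
  show ?case
  proof (rule exI[of _ t'], intro allI impI)
    fix k assume k: "k \<le> N"
    have "int (N choose k) ^ Suc m = int (N choose k) * (\<Sum>j\<le>N. t j * int (k choose j) * int ((N - k) choose j))"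
      using t[OF k] by simp
    also have "\<dots> = (\<Sum>j\<le>N. t j * (int (N choose k) * int (k choose j) * int ((N - k) choose j)))"
      by (simp add: sum_distrib_left algebra_simps)
    also have "\<dots> = (\<Sum>j\<le>N. t j * (int (N choose j) * (\<Sum>i\<le>N. int (i choose j) * int (k choose i) * int ((N - k) choose i))))"
    proof (rule sum.cong)
      fix j assume "j \<in> {..N}"
      have "int ((N choose k) * (k choose j) * ((N - k) choose j))
          = int ((N choose j) * (\<Sum>i\<le>N. (i choose j) * (k choose i) * ((N - k) choose i)))"
        using key_identity[OF k, of j] by simp
      then show "t j * (int (N choose k) * int (k choose j) * int ((N - k) choose j))
          = t j * (int (N choose j) * (\<Sum>i\<le>N. int (i choose j) * int (k choose i) * int ((N - k) choose i)))"
        by simp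
    qed simp
    also have "\<dots> = (\<Sum>j\<le>N. \<Sum>i\<le>N. t j * int (N choose j) * int (i choose j) * (int (k choose i) * int ((N - k) choose i)))"
      by (simp add: sum_distrib_left algebra_simps)
    also have "\<dots> = (\<Sum>i\<le>N. \<Sum>j\<le>N. t j * int (N choose j) * int (i choose j) * (int (k choose i) * int ((N - k) choose i)))"
      by (rule sum.swap)
    also have "\<dots> = (\<Sum>i\<le>N. t' i * int (k choose i) * int ((N - k) choose i))"
      unfolding t'_def by (rule sum.cong) (simp_all add: sum_distrib_right sum_distrib_left algebra_simps)
    finally show "int (N choose k) ^ Suc m = (\<Sum>i\<le>N. t' i * int (k choose i) * int ((N - k) choose i))" .
  qed
qed


lemma coeff_identity:
  fixes N k i :: nat
  assumes "i \<le> k" "k + i \<le> N"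
  shows "(N choose k) * (k choose i) * ((N - k) choose i)
       = (N choose i) * ((N - i) choose i) * ((N - 2 * i) choose (k - i))"
proof -
  have "(N choose k) * (k choose i) * ((N - k) choose i) = (N choose i) * (((N - i) choose k) * (k choose i))"
    using swap_choose[of k N i] assms by (simp add: algebra_simps)
  also have "((N - i) choose k) * (k choose i) = ((N - i) choose i) * ((N - i - i) choose (k - i))"
    using choose_mult[of i k "N - i"] assms by simp
  also have "N - i - i = N - 2 * i" by simp
  finally show ?thesis by (simp add: algebra_simps)
qed

lemma inner_sum:
  fixes a b :: int and N i :: nat
  shows "(\<Sum>k\<le>N. int (N choose k) * int (k choose i) * int ((N - k) choose i) * a ^ (N - k) * b ^ k)
       = int (N choose i) * int ((N - i) choose i) * (a * b) ^ i * (a + b) ^ (N - 2 * i)"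
proof (cases "2 * i \<le> N")
  case False
  have z: "(k choose i) * ((N - k) choose i) = 0" for k
  proof (cases "k < i")
    case True then show ?thesis by (simp add: binomial_eq_0)
  next
    case f: False
    then have "N - k < i" using False by linarith
    then show ?thesis by (simp add: binomial_eq_0)
  qed
  have "N - i < i" using False by linarith
  then have "(N - i) choose i = 0" by (simp add: binomial_eq_0)
  moreover have "(\<Sum>k\<le>N. int (N choose k) * int (k choose i) * int ((N - k) choose i) * a ^ (N - k) * b ^ k) = 0"
  proof (rule sum.neutral, rule ballI)
    fix k
    have "int (k choose i) * int ((N - k) choose i) = 0" using z[of k] by (metis of_nat_0 of_nat_mult)
    then show "int (N choose k) * int (k choose i) * int ((N - k) choose i) * a ^ (N - k) * b ^ k = 0"
      by (metis mult.assoc mult_zero_left mult_zero_right)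
  qed
  ultimately show ?thesis by simp
next
  case True
  define n where "n = N - 2 * i"
  define c where "c = int (N choose i) * int ((N - i) choose i)"
  have "(\<Sum>k\<le>N. int (N choose k) * int (k choose i) * int ((N - k) choose i) * a ^ (N - k) * b ^ k)
      = (\<Sum>k\<in>(\<lambda>s. s + i) ` {..n}. int (N choose k) * int (k choose i) * int ((N - k) choose i) * a ^ (N - k) * b ^ k)"
  proof (rule sum.mono_neutral_right)
    show "finite {..N}" by simp
    show "(\<lambda>s. s + i) ` {..n} \<subseteq> {..N}" using True by (auto simp: n_def)
    show "\<forall>k\<in>{..N} - (\<lambda>s. s + i) ` {..n}. int (N choose k) * int (k choose i) * int ((N - k) choose i) * a ^ (N - k) * b ^ k = 0"
    proof
      fix k assume k: "k \<in> {..N} - (\<lambda>s. s + i) ` {..n}"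
      have "k < i \<or> N - k < i"
      proof (rule ccontr)
        assume "\<not> (k < i \<or> N - k < i)"
        then have "k - i \<in> {..n}" "k = (k - i) + i" using k by (auto simp: n_def)
        then show False using k by blast
      qed
      then have "(k choose i) = 0 \<or> ((N - k) choose i) = 0" by (auto simp: binomial_eq_0)
      then show "int (N choose k) * int (k choose i) * int ((N - k) choose i) * a ^ (N - k) * b ^ k = 0"
        by auto
    qed
  qed
  also have "\<dots> = (\<Sum>s\<le>n. int (N choose (s + i)) * int ((s + i) choose i) * int ((N - (s + i)) choose i) * a ^ (N - (s + i)) * b ^ (s + i))"
    by (subst sum.reindex) (auto simp: inj_on_def)
  also have "\<dots> = (\<Sum>s\<le>n. c * (a * b) ^ i * (of_nat (n choose s) * b ^ s * a ^ (n - s)))"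
  proof (rule sum.cong)
    fix s assume s: "s \<in> {..n}"
    have "(N choose (s + i)) * ((s + i) choose i) * ((N - (s + i)) choose i)
        = (N choose i) * ((N - i) choose i) * ((N - 2 * i) choose (s + i - i))"
      by (rule coeff_identity) (use s True in \<open>auto simp: n_def\<close>)
    then have e1: "int (N choose (s + i)) * int ((s + i) choose i) * int ((N - (s + i)) choose i)
        = c * of_nat (n choose s)"
      by (simp add: c_def n_def flip: of_nat_mult)
    have e2: "a ^ (N - (s + i)) * b ^ (s + i) = (a * b) ^ i * (b ^ s * a ^ (n - s))"
    proof -
      have "N - (s + i) = i + (n - s)" using s True by (auto simp: n_def)
      then show ?thesis by (simp add: power_add power_mult_distrib algebra_simps)
    qed
    show "int (N choose (s + i)) * int ((s + i) choose i) * int ((N - (s + i)) choose i) * a ^ (N - (s + i)) * b ^ (s + i)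
        = c * (a * b) ^ i * (of_nat (n choose s) * b ^ s * a ^ (n - s))"
    proof -
      have "int (N choose (s + i)) * int ((s + i) choose i) * int ((N - (s + i)) choose i) * a ^ (N - (s + i)) * b ^ (s + i)
          = (int (N choose (s + i)) * int ((s + i) choose i) * int ((N - (s + i)) choose i)) * (a ^ (N - (s + i)) * b ^ (s + i))"
        by (simp only: mult.assoc)
      also have "\<dots> = (c * of_nat (n choose s)) * ((a * b) ^ i * (b ^ s * a ^ (n - s)))"
        by (simp only: e1 e2)
      also have "\<dots> = c * (a * b) ^ i * (of_nat (n choose s) * b ^ s * a ^ (n - s))"
        by (simp only: mult_ac)
      finally show ?thesis .
    qed
  qed simp
  also have "\<dots> = c * (a * b) ^ i * (b + a) ^ n"
    by (simp add: binomial_ring sum_distrib_left)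
  finally show ?thesis by (simp add: c_def n_def add.commute)
qed



lemma dvd_transfer:
  fixes x M Y :: int and e k :: nat
  assumes x: "x \<noteq> 0" and Y: "Y \<noteq> 0"
    and bnd: "\<And>p. prime p \<Longrightarrow> multiplicity p Y \<le> k"
    and d: "x ^ e dvd M * Y"
  shows "x ^ e dvd M * x ^ k"
proof (cases "M = 0")
  case True then show ?thesis by simp
next
  case M: False
  show ?thesis
  proof (rule multiplicity_le_imp_dvd)
    show "x ^ e \<noteq> 0" using x by simp
    fix p :: int assume p: "prime p"
    then have pe: "prime_elem p" by (rule prime_imp_prime_elem)
    have MY: "M * Y \<noteq> 0" using M Y by simp
    have 1: "multiplicity p (x ^ e) = e * multiplicity p x"
      using prime_elem_multiplicity_power_distrib[OF pe x] .
    have 2: "multiplicity p (M * x ^ k) = multiplicity p M + k * multiplicity p x"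
    proof -
      have "x ^ k \<noteq> 0" using x by simp
      then have "multiplicity p (M * x ^ k) = multiplicity p M + multiplicity p (x ^ k)"
        by (rule prime_elem_multiplicity_mult_distrib[OF pe M])
      then show ?thesis using prime_elem_multiplicity_power_distrib[OF pe x, of k] by simp
    qed
    have 3: "multiplicity p (x ^ e) \<le> multiplicity p M + multiplicity p Y"
    proof -
      have "multiplicity p (x ^ e) \<le> multiplicity p (M * Y)" by (rule dvd_imp_multiplicity_le[OF d MY])
      then show ?thesis using prime_elem_multiplicity_mult_distrib[OF pe M Y] by simp
    qed
    show "multiplicity p (x ^ e) \<le> multiplicity p (M * x ^ k)"
    proof (cases "multiplicity p x = 0")
      case True then show ?thesis using 1 by simp
    next
      case False
      then have "k \<le> k * multiplicity p x" by simp
      then show ?thesis using 1 2 3 bnd[OF p] by linarith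
    qed
  qed
qed

lemma mult_bound:
  fixes p Y :: int and k :: nat
  assumes p: "prime p" and Y: "0 < Y" and le: "Y < p ^ Suc k"
  shows "multiplicity p Y \<le> k"
proof -
  have "p ^ multiplicity p Y dvd Y" by (rule multiplicity_dvd)
  then have "p ^ multiplicity p Y \<le> Y" using Y by (simp add: zdvd_imp_le)
  then have "p ^ multiplicity p Y < p ^ Suc k" using le by linarith
  moreover have "1 < p" using p prime_gt_1_int by blast
  ultimately have "multiplicity p Y < Suc k" using power_strict_increasing_iff by blast
  then show ?thesis by simp
qed

lemma central_bound:
  fixes p :: int and r :: nat
  assumes p: "prime p"
  shows "multiplicity p (int ((2 * r) choose r)) \<le> 2 * r"
proof (rule mult_bound[OF p])
  show "0 < int ((2 * r) choose r)" by simp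
  have "int ((2 * r) choose r) \<le> 2 ^ (2 * r)"
    using binomial_le_pow2[of "2*r" r] by (metis of_nat_le_iff of_nat_numeral of_nat_power)
  also have "\<dots> < 2 ^ Suc (2 * r)" by simp
  also have "\<dots> \<le> p ^ Suc (2 * r)"
    using prime_ge_2_int[OF p] by (intro power_mono) auto
  finally show "int ((2 * r) choose r) < p ^ Suc (2 * r)" .
qed

lemma aux_ineq: "(2 * r + 1) * 4 ^ r < 3 * (9 :: nat) ^ r"
proof (induction r)
  case 0 then show ?case by simp
next
  case (Suc r)
  have "(4::nat) ^ r \<le> 9 ^ r" by (rule power_mono) auto
  then show ?case using Suc by simp
qed

lemma odd_bound:
  fixes p :: int and r :: nat
  assumes p: "prime p"
  shows "multiplicity p (int (2 * r + 1) * int ((2 * r) choose r)) \<le> 2 * r"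
proof (cases "p = 2")
  case True
  have pe: "prime_elem p" using p by (rule prime_imp_prime_elem)
  have "\<not> p dvd int (2 * r + 1)"
  proof
    assume "p dvd int (2 * r + 1)"
    then have "(2::int) dvd 2 * int r + 1" using True by simp
    then show False by presburger
  qed
  then have "multiplicity p (int (2 * r + 1)) = 0" by (rule not_dvd_imp_multiplicity_0)
  moreover have "multiplicity p (int (2 * r + 1) * int ((2 * r) choose r))
      = multiplicity p (int (2 * r + 1)) + multiplicity p (int ((2 * r) choose r))"
    by (rule prime_elem_multiplicity_mult_distrib[OF pe]) auto
  ultimately show ?thesis using central_bound[OF p, of r] by simp
next
  case False
  then have p3: "3 \<le> p" using prime_ge_2_int[OF p] by linarith
  show ?thesis
  proof (rule mult_bound[OF p])
    show "0 < int (2 * r + 1) * int ((2 * r) choose r)" by simp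
    have "(2 * r + 1) * ((2 * r) choose r) \<le> (2 * r + 1) * 4 ^ r"
    proof -
      have "(2 * r) choose r \<le> 4 ^ r" using binomial_le_pow2[of "2*r" r] by (simp add: power_mult)
      then show ?thesis by (rule mult_le_mono2)
    qed
    also have "\<dots> < 3 * 9 ^ r" by (rule aux_ineq)
    finally have "int ((2 * r + 1) * ((2 * r) choose r)) < int (3 * 9 ^ r)" by linarith
    moreover have "(3::int) ^ Suc (2 * r) = 3 * 9 ^ r" by (simp add: power_mult)
    ultimately have "int (2 * r + 1) * int ((2 * r) choose r) < 3 ^ Suc (2 * r)"
      by (simp add: algebra_simps)
    also have "\<dots> \<le> p ^ Suc (2 * r)" using p3 by (intro power_mono) auto
    finally show "int (2 * r + 1) * int ((2 * r) choose r) < p ^ Suc (2 * r)" .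
  qed
qed



lemma fl: "k \<le> n \<Longrightarrow> (n choose k) * fact k * fact (n - k) = (fact n :: nat)"
  using binomial_fact_lemma[of k n] by (simp add: algebra_simps)

lemma even_rel:
  fixes i r :: nat
  shows "((2*i + 2*r) choose i) * ((2*i + 2*r - i) choose i) * ((2*r) choose r)
       = ((2*(i+r)) choose (i+r)) * ((i + r) choose i)^2"
proof -
  define F :: nat where "F = fact i * fact i * fact r * fact r"
  have F0: "F \<noteq> 0" by (simp add: F_def)
  have a: "((2*i + 2*r) choose i) * fact i * fact (i + 2*r) = fact (2*i+2*r)"
    using fl[of i "2*i+2*r"] by (simp add: algebra_simps)
  have b: "((i + 2*r) choose i) * fact i * fact (2*r) = fact (i + 2*r)"
    using fl[of i "i+2*r"] by simp
  have c: "((2*r) choose r) * fact r * fact r = fact (2*r)"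
    using fl[of r "2*r"] by (simp add: mult_2)
  have d: "((2*(i+r)) choose (i+r)) * fact (i+r) * fact (i+r) = fact (2*i+2*r)"
    using fl[of "i+r" "2*(i+r)"] by (simp add: algebra_simps)
  have e: "((i + r) choose i) * fact i * fact r = fact (i + r)"
    using fl[of i "i+r"] by simp
  have "2*i + 2*r - i = i + 2*r" by simp
  have L: "((2*i + 2*r) choose i) * ((2*i + 2*r - i) choose i) * ((2*r) choose r) * F = fact (2*i+2*r)"
  proof -
    have "((2*i + 2*r) choose i) * ((2*i + 2*r - i) choose i) * ((2*r) choose r) * F
        = ((2*i + 2*r) choose i) * fact i * (((i + 2*r) choose i) * fact i * (((2*r) choose r) * fact r * fact r))"
      by (simp add: F_def \<open>2*i + 2*r - i = i + 2*r\<close> algebra_simps)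
    also have "\<dots> = fact (2*i+2*r)" using a b c by simp
    finally show ?thesis .
  qed
  have R: "((2*(i+r)) choose (i+r)) * ((i + r) choose i)^2 * F = fact (2*i+2*r)"
  proof -
    have "((2*(i+r)) choose (i+r)) * ((i + r) choose i)^2 * F
        = ((2*(i+r)) choose (i+r)) * (((i + r) choose i) * fact i * fact r) * (((i + r) choose i) * fact i * fact r)"
      by (simp add: F_def power2_eq_square algebra_simps)
    also have "\<dots> = fact (2*i+2*r)" using d e by simp
    finally show ?thesis .
  qed
  from L R F0 show ?thesis by (metis mult_cancel2)
qed

lemma odd_rel:
  fixes i r :: nat
  shows "((2*i + 2*r + 1) choose i) * ((2*i + 2*r + 1 - i) choose i) * ((2*r + 1) * ((2*r) choose r))
       = (2*(i+r) + 1) * ((2*(i+r)) choose (i+r)) * ((i + r) choose i)^2"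
proof -
  define F :: nat where "F = fact i * fact i * fact r * fact r"
  have F0: "F \<noteq> 0" by (simp add: F_def)
  have a: "((2*i + 2*r + 1) choose i) * fact i * fact (i + 2*r + 1) = fact (2*i+2*r+1)"
    using fl[of i "2*i+2*r+1"] by (simp add: algebra_simps)
  have b: "((i + 2*r + 1) choose i) * fact i * fact (2*r + 1) = fact (i + 2*r + 1)"
    using fl[of i "i+2*r+1"] by simp
  have c: "((2*r) choose r) * fact r * fact r = fact (2*r)"
    using fl[of r "2*r"] by (simp add: mult_2)
  have c': "(2*r + 1) * fact (2*r) = (fact (2*r+1) :: nat)"
    by simp
  have d: "((2*(i+r)) choose (i+r)) * fact (i+r) * fact (i+r) = fact (2*i+2*r)"
    using fl[of "i+r" "2*(i+r)"] by (simp add: algebra_simps)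
  have d': "(2*(i+r) + 1) * fact (2*i+2*r) = (fact (2*i+2*r+1) :: nat)"
    by (simp add: algebra_simps)
  have e: "((i + r) choose i) * fact i * fact r = fact (i + r)"
    using fl[of i "i+r"] by simp
  have "2*i + 2*r + 1 - i = i + 2*r + 1" by simp
  have L: "((2*i + 2*r + 1) choose i) * ((2*i + 2*r + 1 - i) choose i) * ((2*r + 1) * ((2*r) choose r)) * F = fact (2*i+2*r+1)"
  proof -
    have "((2*i + 2*r + 1) choose i) * ((2*i + 2*r + 1 - i) choose i) * ((2*r + 1) * ((2*r) choose r)) * F
        = ((2*i + 2*r + 1) choose i) * fact i * (((i + 2*r + 1) choose i) * fact i * ((2*r + 1) * (((2*r) choose r) * fact r * fact r)))"
      by (simp add: F_def \<open>2*i + 2*r + 1 - i = i + 2*r + 1\<close> algebra_simps)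
    also have "\<dots> = fact (2*i+2*r+1)" using a b c c' by simp
    finally show ?thesis .
  qed
  have R: "(2*(i+r) + 1) * ((2*(i+r)) choose (i+r)) * ((i + r) choose i)^2 * F = fact (2*i+2*r+1)"
  proof -
    have "(2*(i+r) + 1) * ((2*(i+r)) choose (i+r)) * ((i + r) choose i)^2 * F
        = (2*(i+r) + 1) * (((2*(i+r)) choose (i+r)) * (((i + r) choose i) * fact i * fact r) * (((i + r) choose i) * fact i * fact r))"
      by (simp add: F_def power2_eq_square algebra_simps)
    also have "\<dots> = fact (2*i+2*r+1)" using d e d' by simp
    finally show ?thesis .
  qed
  from L R F0 show ?thesis by (metis mult_cancel2)
qed


lemma pow_dvd_bound:
  fixes x y :: int
  assumes x: "\<bar>x\<bar> \<ge> 2" and y: "y \<noteq> 0" and d: "x ^ e dvd y"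
  shows "e \<le> nat \<bar>y\<bar>"
proof -
  have "\<bar>x ^ e\<bar> \<le> \<bar>y\<bar>" using dvd_imp_le_int[OF y d] .
  moreover have "(2::int) ^ e \<le> \<bar>x\<bar> ^ e" using x by (intro power_mono) auto
  moreover have "int e < 2 ^ e"
  proof -
    have "e < 2 ^ e" by (rule less_exp)
    then show ?thesis by (metis of_nat_less_iff of_nat_numeral of_nat_power)
  qed
  moreover have "\<bar>x ^ e\<bar> = \<bar>x\<bar> ^ e" by (simp add: power_abs)
  ultimately have "int e < \<bar>y\<bar>" by linarith
  then show ?thesis by linarith
qed

lemma omega_mono:
  fixes x y z :: int and c :: nat
  assumes x: "\<bar>x\<bar> \<ge> 2" and z: "z \<noteq> 0"
    and h: "\<And>e. x ^ e dvd z \<Longrightarrow> x ^ (e + c) dvd y"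
  shows "enat c + omega x z \<le> omega x y"
proof (cases "y = 0")
  case True
  then show ?thesis by (simp add: omega_def)
next
  case False
  define E where "E = (GREATEST e. x ^ e dvd z)"
  have bz: "\<And>e. x ^ e dvd z \<Longrightarrow> e \<le> nat \<bar>z\<bar>" using pow_dvd_bound[OF x z] by blast
  have by': "\<And>e. x ^ e dvd y \<Longrightarrow> e \<le> nat \<bar>y\<bar>" using pow_dvd_bound[OF x False] by blast
  have "x ^ E dvd z" unfolding E_def
    by (rule GreatestI_nat[of _ 0 "nat \<bar>z\<bar>"]) (use bz in auto)
  then have "x ^ (E + c) dvd y" by (rule h)
  then have "E + c \<le> (GREATEST e. x ^ e dvd y)"
    by (rule Greatest_le_nat[of _ _ "nat \<bar>y\<bar>"]) (use by' in auto)
  then show ?thesis using False z by (simp add: omega_def E_def)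
qed

lemma B_decomp:
  fixes a b :: int and N m :: nat
  assumes "1 \<le> m"
  shows "\<exists>t::nat \<Rightarrow> int. B N m a b
     = (\<Sum>i\<le>N. t i * (int (N choose i) * int ((N - i) choose i) * (a * b) ^ i * (a + b) ^ (N - 2 * i)))"
proof -
  obtain t :: "nat \<Rightarrow> int" where t: "\<And>k. k \<le> N \<Longrightarrow> int (N choose k) ^ (m - 1)
            = (\<Sum>i\<le>N. t i * int (k choose i) * int ((N - k) choose i))"
    using rep[of N "m - 1"] by blast
  have "B N m a b = (\<Sum>k\<le>N. int (N choose k) ^ m * a ^ (N - k) * b ^ k)"
    by (simp add: B_def atLeast0AtMost)
  also have "\<dots> = (\<Sum>k\<le>N. \<Sum>i\<le>N. t i * (int (N choose k) * int (k choose i) * int ((N - k) choose i) * a ^ (N - k) * b ^ k))"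
  proof (rule sum.cong)
    fix k assume k: "k \<in> {..N}"
    have "int (N choose k) ^ m = int (N choose k) * int (N choose k) ^ (m - 1)"
      using assms by (metis Suc_diff_1 less_le_trans power_Suc zero_less_one)
    also have "\<dots> = int (N choose k) * (\<Sum>i\<le>N. t i * int (k choose i) * int ((N - k) choose i))"
      using t k by simp
    finally show "int (N choose k) ^ m * a ^ (N - k) * b ^ k
        = (\<Sum>i\<le>N. t i * (int (N choose k) * int (k choose i) * int ((N - k) choose i) * a ^ (N - k) * b ^ k))"
      by (simp add: sum_distrib_left sum_distrib_right algebra_simps)
  qed simp
  also have "\<dots> = (\<Sum>i\<le>N. \<Sum>k\<le>N. t i * (int (N choose k) * int (k choose i) * int ((N - k) choose i) * a ^ (N - k) * b ^ k))"
    by (rule sum.swap)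
  also have "\<dots> = (\<Sum>i\<le>N. t i * (int (N choose i) * int ((N - i) choose i) * (a * b) ^ i * (a + b) ^ (N - 2 * i)))"
    by (rule sum.cong) (simp_all add: inner_sum flip: sum_distrib_left)
  finally show ?thesis by blast
qed

theorem theorem2:
  fixes n m :: nat and a b :: int
  assumes "gcd a b = 1" and "a + b \<noteq> 0" and "a + b \<noteq> 1" and "a + b \<noteq> -1"
    and "m > 2"
  shows "omega (a + b) (B (2 * n) m a b) \<ge> omega (a + b) (int ((2 * n) choose n))
    \<and> omega (a + b) (B (2 * n + 1) m a b)
           \<ge> 1 + omega (a + b) (int (2 * n + 1) * int ((2 * n) choose n))"
proof -
  define x where "x = a + b"
  have x0: "x \<noteq> 0" using assms by (simp add: x_def)
  have x2: "\<bar>x\<bar> \<ge> 2" using assms by (auto simp: x_def)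
  have m1: "1 \<le> m" using assms by simp
  have part1: "x ^ (e + 0) dvd B (2 * n) m a b" if he: "x ^ e dvd int ((2 * n) choose n)" for e
  proof -
    obtain t :: "nat \<Rightarrow> int" where t: "B (2 * n) m a b
       = (\<Sum>i\<le>2 * n. t i * (int ((2 * n) choose i) * int ((2 * n - i) choose i) * (a * b) ^ i * x ^ (2 * n - 2 * i)))"
      using B_decomp[OF m1, of "2 * n" a b] unfolding x_def by blast
    have "x ^ e dvd t i * (int ((2 * n) choose i) * int ((2 * n - i) choose i) * (a * b) ^ i * x ^ (2 * n - 2 * i))"
      for i
    proof (cases "i \<le> n")
      case False
      then have "2 * n - i < i" by linarith
      then have "(2 * n - i) choose i = 0" by (simp add: binomial_eq_0)
      then show ?thesis by (metis dvd_0_right mult_zero_left mult_zero_right of_nat_0)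
    next
      case True
      then obtain r where r: "n = i + r" using le_Suc_ex by blast
      define M where "M = int ((2 * n) choose i) * int ((2 * n - i) choose i)"
      have rel: "M * int ((2 * r) choose r) = int ((2 * n) choose n) * int ((n choose i) ^ 2)"
        using even_rel[of i r] unfolding M_def r
        by (metis (no_types, lifting) distrib_left of_nat_mult)
      have "x ^ e dvd M * int ((2 * r) choose r)"
        using rel he by (metis dvd_mult2)
      moreover have "\<And>p. prime p \<Longrightarrow> multiplicity p (int ((2 * r) choose r)) \<le> 2 * r"
        by (rule central_bound)
      moreover have "int ((2 * r) choose r) \<noteq> 0" by simp
      ultimately have "x ^ e dvd M * x ^ (2 * r)"
        using dvd_transfer[OF x0] by blast
      moreover have "2 * n - 2 * i = 2 * r" using r by simp
      ultimately show ?thesis unfolding M_def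
        by (metis (no_types, lifting) dvd_mult dvd_mult2 mult.assoc mult.commute)
    qed
    then show ?thesis unfolding t by (simp add: dvd_sum)
  qed
  have part2: "x ^ (e + 1) dvd B (2 * n + 1) m a b"
    if he: "x ^ e dvd int (2 * n + 1) * int ((2 * n) choose n)" for e
  proof -
    obtain t :: "nat \<Rightarrow> int" where t: "B (2 * n + 1) m a b
       = (\<Sum>i\<le>2 * n + 1. t i * (int ((2 * n + 1) choose i) * int ((2 * n + 1 - i) choose i) * (a * b) ^ i * x ^ (2 * n + 1 - 2 * i)))"
      using B_decomp[OF m1, of "2 * n + 1" a b] unfolding x_def by blast
    have "x ^ (e + 1) dvd t i * (int ((2 * n + 1) choose i) * int ((2 * n + 1 - i) choose i) * (a * b) ^ i * x ^ (2 * n + 1 - 2 * i))"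
      for i
    proof (cases "i \<le> n")
      case False
      then have "2 * n + 1 - i < i" by linarith
      then have "(2 * n + 1 - i) choose i = 0" by (simp add: binomial_eq_0)
      then show ?thesis by (metis dvd_0_right mult_zero_left mult_zero_right of_nat_0)
    next
      case True
      then obtain r where r: "n = i + r" using le_Suc_ex by blast
      define M where "M = int ((2 * n + 1) choose i) * int ((2 * n + 1 - i) choose i)"
      have rel: "M * (int (2 * r + 1) * int ((2 * r) choose r))
          = int (2 * n + 1) * int ((2 * n) choose n) * int ((n choose i) ^ 2)"
        using odd_rel[of i r] unfolding M_def r
        by (metis (no_types, lifting) distrib_left of_nat_mult)
      have "x ^ e dvd M * (int (2 * r + 1) * int ((2 * r) choose r))"
        using rel he by (metis dvd_mult2)
      moreover have "\<And>p. prime p \<Longrightarrow> multiplicity p (int (2 * r + 1) * int ((2 * r) choose r)) \<le> 2 * r"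
        by (rule odd_bound)
      moreover have "int (2 * r + 1) * int ((2 * r) choose r) \<noteq> 0" by simp
      ultimately have "x ^ e dvd M * x ^ (2 * r)"
        using dvd_transfer[OF x0] by blast
      then have "x ^ (e + 1) dvd M * x ^ (2 * r + 1)"
        by (metis mult.assoc mult_dvd_mono dvd_refl power_add power_one_right)
      moreover have "2 * n + 1 - 2 * i = 2 * r + 1" using r by simp
      ultimately show ?thesis unfolding M_def
        by (metis (no_types, lifting) dvd_mult dvd_mult2 mult.assoc mult.commute)
    qed
    then show ?thesis unfolding t by (simp add: dvd_sum)
  qed
  have z1: "int ((2 * n) choose n) \<noteq> 0" by simp
  have z2: "int (2 * n + 1) * int ((2 * n) choose n) \<noteq> 0" by simp
  have "enat 0 + omega x (int ((2 * n) choose n)) \<le> omega x (B (2 * n) m a b)"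
    by (rule omega_mono[OF x2 z1 part1])
  moreover have "enat 1 + omega x (int (2 * n + 1) * int ((2 * n) choose n)) \<le> omega x (B (2 * n + 1) m a b)"
    by (rule omega_mono[OF x2 z2 part2])
  moreover have "enat 0 = 0" "enat 1 = 1" by (simp_all add: zero_enat_def one_enat_def)
  ultimately show ?thesis unfolding x_def by (metis add_0)
qed

end
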